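(* Let $\Omega\subset\mathbb C$ be a domain, $x\in\Omega$, and let $(f_n)$ be a sequence of holomorphic functions $\Omega\to\mathbb C$ which is not normal on any neighborhood of $x$. Then there is a subsequence $(f_{n_k})$ such that no subsequence of $(f_{n_k})$ converges uniformly (with respect to the spherical metric) on any neighborhood of $x$.
   Context: Convergence is understood uniformly with respect to the spherical metric on $\hat{\mathbb C}$ (limit $\equiv\infty$ allowed). A sequence of holomorphic functions on an open set $U$ is normal on $U$ if each of its subsequences has a further subsequence converging locally uniformly on $U$ in this sense. *)

theory Defs
  imports "HOL-Analysis.Analysis"
begin

text \<open>The Riemann sphere is represented as complex option: Some z is the finite
point z, None is the point at infinity.  The spherical (chordal) metric:\<close>

fun chordal :: "complex option \<Rightarrow> complex option \<Rightarrow> real" where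
  "chordal (Some z) (Some w) =
     2 * cmod (z - w) / (sqrt (1 + (cmod z)\<^sup>2) * sqrt (1 + (cmod w)\<^sup>2))"
| "chordal (Some z) None = 2 / sqrt (1 + (cmod z)\<^sup>2)"
| "chordal None (Some w) = 2 / sqrt (1 + (cmod w)\<^sup>2)"
| "chordal None None = 0"

text \<open>Uniform convergence on a set K w.r.t. the spherical metric; the limit
is a function into the Riemann sphere (so the limit identically infinity is allowed).\<close>

definition sph_unif_conv_on ::
  "(nat \<Rightarrow> complex \<Rightarrow> complex) \<Rightarrow> (complex \<Rightarrow> complex option) \<Rightarrow> complex set \<Rightarrow> bool" where
  "sph_unif_conv_on F g K \<longleftrightarrow>
     (\<forall>e>0. \<forall>\<^sub>F n in sequentially. \<forall>z\<in>K. chordal (Some (F n z)) (g z) < e)"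

definition sph_loc_unif_conv_on ::
  "(nat \<Rightarrow> complex \<Rightarrow> complex) \<Rightarrow> (complex \<Rightarrow> complex option) \<Rightarrow> complex set \<Rightarrow> bool" where
  "sph_loc_unif_conv_on F g U \<longleftrightarrow>
     (\<forall>K. compact K \<and> K \<subseteq> U \<longrightarrow> sph_unif_conv_on F g K)"

definition normal_seq_on :: "(nat \<Rightarrow> complex \<Rightarrow> complex) \<Rightarrow> complex set \<Rightarrow> bool" where
  "normal_seq_on F U \<longleftrightarrow>
     (\<forall>r::nat\<Rightarrow>nat. strict_mono r \<longrightarrow>
        (\<exists>s g. strict_mono s \<and> sph_loc_unif_conv_on (F \<circ> r \<circ> s) g U))"

end

theory Submission
  imports Defs "HOL-Complex_Analysis.Great_Picard"
begin

lemma pos3: "0 < 1 + (a::real)^2 + b^2"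
proof - have "0 \<le> a^2" "0 \<le> b^2" by auto then show ?thesis by linarith qed

lemma h1: "0 \<le> (c::real) \<Longrightarrow> (2/(1+c))^2*c + ((c-1)/(1+c) - 1)^2 = 4/(1+c)"
proof -
  assume "0 \<le> c" then have n: "1 + c \<noteq> 0" by linarith
  have "(c-1)/(1+c) - 1 = -2/(1+c)" using n by (simp add: field_simps)
  then have "(2/(1+c))^2*c + ((c-1)/(1+c) - 1)^2 = (4*c + 4)/(1+c)^2"
    by (simp add: power_divide add_divide_distrib)
  also have "\<dots> = 4*(1+c)/((1+c)*(1+c))" by (simp add: power2_eq_square algebra_simps)
  also have "\<dots> = 4/(1+c)" using n by (metis mult.commute mult_divide_mult_cancel_left_if)
  finally show ?thesis .
qed
lemma h2: "0 \<le> (c::real) \<Longrightarrow> (2/(1+c))^2*c + ((c-1)/(1+c))^2 = 1"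
proof -
  assume "0 \<le> c" then have n: "1 + c \<noteq> 0" by linarith
  have "(2/(1+c))^2*c + ((c-1)/(1+c))^2 = (4*c + (c-1)^2)/(1+c)^2"
    by (simp add: power_divide add_divide_distrib)
  also have "4*c + (c-1)^2 = (1+c)^2" by algebra
  finally show ?thesis using n by simp
qed

fun sig :: "complex option \<Rightarrow> complex \<times> real" where
  "sig None = (0, 1)"
| "sig (Some z) = ((2 / (1 + (cmod z)\<^sup>2)) *\<^sub>R z, ((cmod z)\<^sup>2 - 1) / (1 + (cmod z)\<^sup>2))"

lemma real_ident:
  fixes a b c d :: real
  assumes "A = 1 + a^2 + b^2" "B = 1 + c^2 + d^2"
  shows "(2*a/A - 2*c/B)^2 + (2*b/A - 2*d/B)^2 + ((a^2+b^2-1)/A - (c^2+d^2-1)/B)^2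
        = 4 * ((a-c)^2 + (b-d)^2) / (A*B)"
proof -
  have A: "A \<noteq> 0" "B \<noteq> 0" using assms pos3 by (metis less_irrefl)+
  have "(2*a/A - 2*c/B) = (2*a*B - 2*c*A)/(A*B)" "(2*b/A - 2*d/B) = (2*b*B - 2*d*A)/(A*B)"
     "((a^2+b^2-1)/A - (c^2+d^2-1)/B) = ((a^2+b^2-1)*B - (c^2+d^2-1)*A)/(A*B)"
    using A by (simp_all add: field_simps)
  moreover have "(2*a*B - 2*c*A)^2 + (2*b*B - 2*d*A)^2 + ((a^2+b^2-1)*B - (c^2+d^2-1)*A)^2
     = 4 * ((a-c)^2 + (b-d)^2) * (A*B)"
    unfolding assms by algebra
  ultimately show ?thesis using A by (simp add: power_divide add_divide_distrib[symmetric] power2_eq_square)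
qed

lemma chordal_sig_SS: "chordal (Some z) (Some w) = dist (sig (Some z)) (sig (Some w))"
proof -
  define A where "A = 1 + (Re z)^2 + (Im z)^2"
  define B where "B = 1 + (Re w)^2 + (Im w)^2"
  have A: "A > 0" "B > 0" unfolding A_def B_def by (auto intro: pos3)
  have cz: "(cmod z)^2 = (Re z)^2 + (Im z)^2" "(cmod w)^2 = (Re w)^2 + (Im w)^2"
    by (simp_all add: cmod_power2)
  have cd: "(cmod (z - w))^2 = (Re z - Re w)^2 + (Im z - Im w)^2" by (simp add: cmod_power2)
  have "(dist (sig (Some z)) (sig (Some w)))^2 =
     (cmod ((2 / A) *\<^sub>R z - (2 / B) *\<^sub>R w))^2 + ((A - 2)/A - (B-2)/B)^2"
    unfolding dist_prod_def using A by (simp add: cz A_def B_def dist_norm add.assoc)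
  also have "\<dots> = (2*Re z/A - 2*Re w/B)^2 + (2*Im z/A - 2*Im w/B)^2
        + (((Re z)^2+(Im z)^2-1)/A - ((Re w)^2+(Im w)^2-1)/B)^2"
    by (simp add: cmod_power2 A_def B_def)
  also have "\<dots> = 4 * (cmod (z-w))^2 / (A*B)" unfolding cd
    by (rule real_ident) (simp_all add: A_def B_def)
  also have "\<dots> = (chordal (Some z) (Some w))^2"
    using A by (simp add: power_divide power_mult_distrib cz A_def B_def add.assoc real_sqrt_mult)
  finally have e: "(dist (sig (Some z)) (sig (Some w)))^2 = (chordal (Some z) (Some w))^2" .
  have "chordal (Some z) (Some w) \<ge> 0" by simp
  then show ?thesis using power2_eq_imp_eq[OF e zero_le_dist] by simp
qed


lemma chordal_sig_SN: "chordal (Some z) None = dist (sig (Some z)) (sig None)"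
proof -
  define A where "A = 1 + (cmod z)^2"
  have A: "A > 0" unfolding A_def by (simp add: add_pos_nonneg)
  have "(dist (sig (Some z)) (sig None))^2 = (2/A)^2 * (cmod z)^2 + ((cmod z ^2 - 1)/A - 1)^2"
    unfolding dist_prod_def using A by (simp add: A_def dist_norm power_divide power_mult_distrib power2_commute)
  also have "\<dots> = 4 / A"
    unfolding A_def by (rule h1) simp
  also have "\<dots> = (chordal (Some z) None)^2"
    using A by (simp add: A_def power_divide)
  finally have e: "(dist (sig (Some z)) (sig None))^2 = (chordal (Some z) None)^2" .
  have "chordal (Some z) None \<ge> 0" by simp
  then show ?thesis using power2_eq_imp_eq[OF e zero_le_dist] by simp
qed

lemma chordal_sig: "chordal a b = dist (sig a) (sig b)"
  apply (cases a; cases b)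
  using chordal_sig_SS chordal_sig_SN by (auto simp: dist_commute)

lemma chordal_triangle: "chordal a c \<le> chordal a b + chordal b c"
  unfolding chordal_sig by (rule dist_triangle)

lemma chordal_commute: "chordal a b = chordal b a"
  unfolding chordal_sig by (rule dist_commute)

lemma norm_sig: "norm (sig a) = 1"
proof (cases a)
  case None then show ?thesis by simp
next
  case (Some z)
  define A where "A = 1 + (cmod z)^2"
  have A: "A > 0" unfolding A_def by (simp add: add_pos_nonneg)
  have "(norm (sig a))^2 = (2/A)^2 * (cmod z)^2 + ((cmod z ^2 - 1)/A)^2"
    using Some A by (simp add: A_def norm_Pair power_divide power_mult_distrib)
  also have "\<dots> = 1"
    unfolding A_def by (rule h2) simp
  finally show ?thesis using norm_ge_zero[of "sig a"] by (simp add: power2_eq_1_iff)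
qed

definition tau :: "complex \<times> real \<Rightarrow> complex option" where
  "tau p = (if snd p = 1 then None else Some (fst p / of_real (1 - snd p)))"

lemma sig_tau: assumes "norm p = 1" shows "sig (tau p) = p"
proof (cases p)
  case (Pair q t)
  have "sqrt ((cmod q)^2 + (norm t)^2) = 1" using assms Pair by (simp add: norm_Pair)
  then have n: "(cmod q)^2 + t^2 = 1" by simp
  show ?thesis
  proof (cases "t = 1")
    case True
    then have "q = 0" using n by simp
    then show ?thesis using True Pair by (simp add: tau_def)
  next
    case False
    have "t^2 \<le> 1" using n by (smt (verit) zero_le_power2)
    then have "t \<le> 1" by (metis abs_le_square_iff abs_one abs_ge_self order_trans one_power2)
    then have t1: "t < 1" using False by simp
    define z where "z = q / of_real (1 - t)"
    have "cmod z = cmod q / (1 - t)" using t1 unfolding z_def by (simp add: norm_divide del: of_real_diff)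
    then have "(cmod z)^2 = (cmod q)^2 / (1 - t)^2" by (simp add: power_divide)
    also have "(cmod q)^2 = (1 - t) * (1 + t)" using n by (simp add: algebra_simps power2_eq_square)
    also have "(1 - t) * (1 + t) / (1 - t)^2 = (1 + t) / (1 - t)" using t1 by (simp add: power2_eq_square)
    finally have cz: "(cmod z)^2 = (1 + t) / (1 - t)" .
    have A: "1 + (cmod z)^2 = 2 / (1 - t)" unfolding cz using t1 by (simp add: field_simps)
    have a2: "2 / (1 + (cmod z)^2) = 1 - t" using A t1 by simp
    have ne: "(of_real (1 - t) :: complex) \<noteq> 0" using t1 by simp
    have c1: "(2 / (1 + (cmod z)^2)) *\<^sub>R z = q" unfolding a2 using ne
      by (simp add: z_def scaleR_conv_of_real del: of_real_diff)
    have c2: "((cmod z)^2 - 1) / (1 + (cmod z)^2) = t" unfolding A cz using t1 by (simp add: field_simps)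
    have "sig (Some z) = (q, t)" using c1 c2 by simp
    then show ?thesis using Pair False by (simp add: tau_def z_def)
  qed
qed

lemma chordal_le: "chordal (Some u) (Some v) \<le> 2 * cmod (u - v)"
proof -
  have s1: "1 \<le> sqrt (1 + (cmod u)\<^sup>2)" "1 \<le> sqrt (1 + (cmod v)\<^sup>2)" by simp_all
  have D: "1 \<le> sqrt (1 + (cmod u)\<^sup>2) * sqrt (1 + (cmod v)\<^sup>2)"
    using mult_mono[OF s1] by simp
  have "2 * cmod (u - v) / (sqrt (1 + (cmod u)\<^sup>2) * sqrt (1 + (cmod v)\<^sup>2)) \<le> 2 * cmod (u - v) / 1"
    by (rule divide_left_mono) (use D in auto)
  then show ?thesis by simp
qed

lemma r2g: assumes "(M::real) > 0" shows "(1/M - 1)/(1 + 1/M) = -((M-1)/(1+M))"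
proof -
  have "1/M - 1 = (1-M)/M" "1+1/M = (1+M)/M" using assms by (simp_all add: field_simps)
  then show ?thesis using assms by (simp add: minus_divide_left)
qed

lemma sig_inverse: assumes "u \<noteq> 0"
  shows "sig (Some (inverse u)) = (cnj (fst (sig (Some u))), - snd (sig (Some u)))"
proof -
  define m where "m = cmod u"
  have c: "m > 0" using assms by (simp add: m_def)
  have "cmod (inverse u) = inverse m" unfolding m_def by (rule norm_inverse)
  then have n: "(cmod (inverse u))^2 = 1 / m^2" by (simp add: power_inverse divide_inverse)
  have i: "inverse u = (1 / m^2) *\<^sub>R cnj u"
    proof -
    have "inverse u = 1 / u" by (simp add: inverse_eq_divide)
    also have "\<dots> = cnj u / of_real (m^2)" using complex_div_cnj[of 1 u] by (simp add: m_def)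
    also have "\<dots> = (1 / m^2) *\<^sub>R cnj u" by (simp add: scaleR_conv_of_real)
    finally show ?thesis .
  qed
  have M: "m^2 > 0" "1 + m^2 \<noteq> 0" using c by (auto, smt (verit) zero_le_power2)
  have r1: "2 / (1 + 1 / m^2) * (1 / m^2) = 2 / (1 + m^2)" using M by (simp add: field_simps)
  have r2: "(1 / m^2 - 1) / (1 + 1 / m^2) = - ((m^2 - 1) / (1 + m^2))" using M(1) by (rule r2g)
  have r3: "(1 + 1 / m^2) * m^2 = 1 + m^2" using M by (simp add: distrib_right)
  show ?thesis
    by (simp only: sig.simps n r2 fst_conv snd_conv m_def[symmetric]) (simp add: i r1 r3)
qed

lemma chordal_inverse: assumes "u \<noteq> 0" "v \<noteq> 0"
  shows "chordal (Some (inverse u)) (Some (inverse v)) = chordal (Some u) (Some v)"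
  unfolding chordal_sig sig_inverse[OF assms(1)] sig_inverse[OF assms(2)]
  by (simp add: dist_prod_def dist_norm complex_cnj_diff[symmetric] complex_cnj_scaleR[symmetric] abs_minus_commute del: complex_cnj_scaleR complex_cnj_diff)

lemma snd_sig_small: "cmod u \<le> 1 \<Longrightarrow> snd (sig (Some u)) \<le> 0"
  by (simp add: divide_nonpos_pos add_pos_nonneg power_le_one)

lemma snd_sig_large: assumes "2 \<le> cmod u" shows "3/5 \<le> snd (sig (Some u))"
proof -
  have "4 \<le> (cmod u)^2" using assms power_mono[OF assms, of 2] by simp
  then show ?thesis by (simp add: field_simps add_pos_nonneg)
qed

lemma chordal_ge_snd: "\<bar>snd (sig a) - snd (sig b)\<bar> \<le> chordal a b"
  unfolding chordal_sig dist_prod_def using real_sqrt_sum_squares_ge2 by (simp add: dist_real_def)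


lemma bnd_lip:
  assumes hol: "\<phi> holomorphic_on ball z \<delta>" and d: "\<delta> > 0"
    and bd: "\<And>w. w \<in> ball z \<delta> \<Longrightarrow> cmod (\<phi> w) < 2"
    and a: "a \<in> ball z (\<delta>/2)" and b: "b \<in> ball z (\<delta>/2)"
  shows "cmod (\<phi> a - \<phi> b) \<le> 8 / \<delta> * cmod (a - b)"
proof (rule field_differentiable_bound[of "ball z (\<delta>/2)" \<phi> "deriv \<phi>"])
  show "convex (ball z (\<delta>/2))" by simp
  show "a \<in> ball z (\<delta>/2)" "b \<in> ball z (\<delta>/2)" using a b by auto
  fix w assume w: "w \<in> ball z (\<delta>/2)"
  then have "dist z w < \<delta>/2" by simp
  then have wb: "w \<in> ball z \<delta>" using d by simp
  have "\<phi> field_differentiable (at w)"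
    using hol wb holomorphic_on_imp_differentiable_at by blast
  then show "(\<phi> has_field_derivative deriv \<phi> w) (at w within ball z (\<delta>/2))"
    using DERIV_deriv_iff_field_differentiable has_field_derivative_at_within by blast
  have sub: "cball w (\<delta>/4) \<subseteq> ball z \<delta>"
  proof
    fix y assume "y \<in> cball w (\<delta>/4)"
    then have "dist w y \<le> \<delta>/4" by simp
    moreover have "dist z w < \<delta>/2" using w by simp
    ultimately show "y \<in> ball z \<delta>" using dist_triangle[of z y w] d by simp
  qed
  have "cmod ((deriv ^^ 1) \<phi> w) \<le> fact 1 * 2 / (\<delta>/4)^1"
  proof (rule Cauchy_higher_deriv_bound)
    show "\<phi> holomorphic_on ball w (\<delta> / 4)" using hol sub ball_subset_cball
      by (meson holomorphic_on_subset order_trans)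
    show "continuous_on (cball w (\<delta> / 4)) \<phi>"
      using holomorphic_on_imp_continuous_on hol sub continuous_on_subset by blast
    show "\<And>w'. w' \<in> ball w (\<delta> / 4) \<Longrightarrow> \<phi> w' \<in> ball 0 2"
      using bd sub ball_subset_cball by (force simp: dist_norm)
  qed (use d in auto)
  then show "cmod (deriv \<phi> w) \<le> 8 / \<delta>" by simp
qed

lemma snd_sep: assumes "3/5 \<le> snd (sig a)" "snd (sig b) \<le> 0" shows "1/2 \<le> chordal a b"
proof -
  have "snd (sig a) - snd (sig b) \<le> chordal a b"
    using chordal_ge_snd[of a b] abs_ge_self order_trans by blast
  then show ?thesis using assms by linarith
qed

lemma osc_lip:
  assumes hol: "h holomorphic_on ball z \<delta>" and d: "\<delta> > 0"
    and osc: "\<And>a b. a \<in> ball z \<delta> \<Longrightarrow> b \<in> ball z \<delta> \<Longrightarrow> chordal (Some (h a)) (Some (h b)) < 1/2"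
    and a: "a \<in> ball z (\<delta>/2)" and b: "b \<in> ball z (\<delta>/2)"
  shows "chordal (Some (h a)) (Some (h b)) \<le> 16 / \<delta> * cmod (a - b)"
proof (cases "cmod (h z) \<le> 1")
  case True
  have bd: "cmod (h w) < 2" if w: "w \<in> ball z \<delta>" for w
  proof (rule ccontr)
    assume "\<not> cmod (h w) < 2"
    then have "3/5 \<le> snd (sig (Some (h w)))" by (intro snd_sig_large) simp
    moreover have "snd (sig (Some (h z))) \<le> 0" using True by (rule snd_sig_small)
    moreover have "chordal (Some (h w)) (Some (h z)) < 1/2" using osc w d by simp
    ultimately show False using snd_sep[of "Some (h w)" "Some (h z)"] by linarith
  qed
  have "chordal (Some (h a)) (Some (h b)) \<le> 2 * cmod (h a - h b)" by (rule chordal_le)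
  also have "\<dots> \<le> 2 * (8 / \<delta> * cmod (a - b))"
    using bnd_lip[OF hol d bd a b] by simp
  finally show ?thesis by simp
next
  case False
  have bd: "h w \<noteq> 0 \<and> cmod (inverse (h w)) < 2" if w: "w \<in> ball z \<delta>" for w
  proof (rule ccontr)
    assume A: "\<not> (h w \<noteq> 0 \<and> cmod (inverse (h w)) < 2)"
    have hz: "h z \<noteq> 0" using False by auto
    have "cmod (inverse (h z)) \<le> 1" using False by (simp add: norm_inverse inverse_le_1_iff)
    then have s1: "snd (sig (Some (inverse (h z)))) \<le> 0" by (rule snd_sig_small)
    show False
    proof (cases "h w = 0")
      case True
      have "snd (sig (Some (h z))) > 0" using False by (simp add: divide_pos_pos add_pos_nonneg)
      moreover have "chordal (Some (h w)) (Some (h z)) < 1/2" using osc w d by simp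
      moreover have "snd (sig (Some (h w))) = -1" using True by simp
      moreover have "snd (sig (Some (h z))) - snd (sig (Some (h w))) \<le> chordal (Some (h w)) (Some (h z))"
        using chordal_ge_snd[of "Some (h w)" "Some (h z)"] abs_ge_self abs_minus_commute order_trans by metis
      ultimately show False by linarith
    next
      case hw: False
      then have "2 \<le> cmod (inverse (h w))" using A by simp
      then have "3/5 \<le> snd (sig (Some (inverse (h w))))" by (rule snd_sig_large)
      moreover have "chordal (Some (inverse (h w))) (Some (inverse (h z))) < 1/2"
        using osc w d chordal_inverse[OF hw hz] by simp
      ultimately show False using snd_sep[of "Some (inverse (h w))" "Some (inverse (h z))"] s1 by linarith
    qed
  qed
  have hol': "(\<lambda>w. inverse (h w)) holomorphic_on ball z \<delta>"
    using hol bd by (intro holomorphic_on_inverse) auto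
  have "dist z a < \<delta>/2" "dist z b < \<delta>/2" "0 \<le> dist z a" "0 \<le> dist z b" using a b by auto
  then have ab: "a \<in> ball z \<delta>" "b \<in> ball z \<delta>" unfolding mem_ball by linarith+
  have "chordal (Some (h a)) (Some (h b)) = chordal (Some (inverse (h a))) (Some (inverse (h b)))"
    using chordal_inverse bd ab by metis
  also have "\<dots> \<le> 2 * cmod (inverse (h a) - inverse (h b))" by (rule chordal_le)
  also have "\<dots> \<le> 2 * (8 / \<delta> * cmod (a - b))"
    using bnd_lip[OF hol' d _ a b] bd by simp
  finally show ?thesis by simp
qed


lemma good_conv:
  fixes h :: "nat \<Rightarrow> complex \<Rightarrow> complex"
  assumes S: "compact S" and d: "\<delta> > 0"
    and hol: "\<And>n z. z \<in> S \<Longrightarrow> h n holomorphic_on ball z \<delta>"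
    and osc: "\<And>n z a b. z \<in> S \<Longrightarrow> a \<in> ball z \<delta> \<Longrightarrow> b \<in> ball z \<delta> \<Longrightarrow>
                chordal (Some (h n a)) (Some (h n b)) < 1/2"
  shows "\<exists>s g. strict_mono s \<and> sph_unif_conv_on (h \<circ> s) g S"
proof -
  define F where "F n y = sig (Some (h n y))" for n y
  obtain g' k where k: "strict_mono (k :: nat \<Rightarrow> nat)"
    and conv: "\<And>e. 0 < e \<Longrightarrow> \<exists>N. \<forall>n x. n \<ge> N \<and> x \<in> S \<longrightarrow> norm(F (k n) x - g' x) < e"
  proof (rule Arzela_Ascoli[OF S, of F 1])
    show "\<And>n x. x \<in> S \<Longrightarrow> norm (F n x) \<le> 1" unfolding F_def norm_sig by simp
    fix x e assume x: "x \<in> S" and e: "(0::real) < e"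
    define d0 where "d0 = min (\<delta>/2) (e * \<delta> / 32)"
    have d0: "d0 > 0" using d e by (simp add: d0_def)
    have "norm (F n x - F n y) < e" if y: "y \<in> S" "norm (x - y) < d0" for n y
    proof -
      have xb: "x \<in> ball x (\<delta>/2)" using d by simp
      have yb: "y \<in> ball x (\<delta>/2)" using y by (simp add: dist_norm d0_def)
      have "chordal (Some (h n x)) (Some (h n y)) \<le> 16 / \<delta> * cmod (x - y)"
        by (rule osc_lip[OF hol[OF x] d _ xb yb]) (use osc x in auto)
      also have "\<dots> \<le> 16 / \<delta> * (e * \<delta> / 32)"
        using y(2) d by (intro mult_left_mono) (auto simp: d0_def)
      also have "\<dots> < e" using d e by (simp add: field_simps)
      finally show ?thesis by (simp add: F_def chordal_sig dist_norm)
    qed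
    then show "\<exists>d>0. \<forall>n y. y \<in> S \<and> norm (x - y) < d \<longrightarrow> norm (F n x - F n y) < e"
      using d0 by blast
  qed blast
  have n1: "norm (g' y) = 1" if y: "y \<in> S" for y
  proof (rule ccontr)
    assume ne: "norm (g' y) \<noteq> 1"
    then obtain N where N: "\<forall>n x. n \<ge> N \<and> x \<in> S \<longrightarrow> norm(F (k n) x - g' x) < \<bar>norm (g' y) - 1\<bar>"
      using conv[of "\<bar>norm (g' y) - 1\<bar>"] by auto
    then have "norm(F (k N) y - g' y) < \<bar>norm (g' y) - 1\<bar>" using y by blast
    moreover have "\<bar>norm (F (k N) y) - norm (g' y)\<bar> \<le> norm(F (k N) y - g' y)"
      by (rule norm_triangle_ineq3)
    moreover have "norm (F (k N) y) = 1" unfolding F_def by (rule norm_sig)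
    ultimately show False by linarith
  qed
  have "sph_unif_conv_on (h \<circ> k) (\<lambda>y. tau (g' y)) S"
    unfolding sph_unif_conv_on_def eventually_sequentially
  proof (intro allI impI)
    fix e :: real assume "e > 0"
    then obtain N where N: "\<forall>n x. n \<ge> N \<and> x \<in> S \<longrightarrow> norm(F (k n) x - g' x) < e"
      using conv by blast
    show "\<exists>N. \<forall>n\<ge>N. \<forall>z\<in>S. chordal (Some ((h \<circ> k) n z)) (tau (g' z)) < e"
    proof (intro exI allI impI ballI)
      fix n z assume "N \<le> n" "z \<in> S"
      then show "chordal (Some ((h \<circ> k) n z)) (tau (g' z)) < e"
        using N n1 by (simp add: chordal_sig sig_tau dist_norm F_def)
    qed
  qed
  then show ?thesis using k by blast
qed


lemma choose_seq:
  assumes "\<And>k N. \<exists>n\<ge>N. P k n"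
  obtains r :: "nat \<Rightarrow> nat" where "strict_mono r" "\<And>k. P k (r k)"
proof -
  define c where "c k N = (SOME n. n \<ge> N \<and> P k n)" for k N
  have c: "c k N \<ge> N \<and> P k (c k N)" for k N
    unfolding c_def using assms[of N k] by (rule someI_ex)
  define r where "r = rec_nat (c 0 0) (\<lambda>k m. c (Suc k) (Suc m))"
  have r0: "r 0 = c 0 0" and rS: "\<And>k. r (Suc k) = c (Suc k) (Suc (r k))"
    by (simp_all add: r_def)
  have "strict_mono r"
    unfolding strict_mono_Suc_iff using c rS by (metis Suc_le_lessD)
  moreover have "P k (r k)" for k
    by (cases k) (use c r0 rS in auto)
  ultimately show ?thesis using that by blast
qed

theorem mainTheorem5:
  fixes \<Omega> :: "complex set" and x :: complex and f :: "nat \<Rightarrow> complex \<Rightarrow> complex"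
  assumes "open \<Omega>" and "connected \<Omega>" and "x \<in> \<Omega>"
    and "\<And>n. f n holomorphic_on \<Omega>"
    and "\<And>V. open V \<Longrightarrow> x \<in> V \<Longrightarrow> V \<subseteq> \<Omega> \<Longrightarrow> \<not> normal_seq_on f V"
  shows "\<exists>r::nat\<Rightarrow>nat. strict_mono r \<and>
           (\<forall>(s::nat\<Rightarrow>nat) V. strict_mono s \<longrightarrow> open V \<longrightarrow> x \<in> V \<longrightarrow> V \<subseteq> \<Omega> \<longrightarrow>
              \<not> (\<exists>g. sph_unif_conv_on (f \<circ> r \<circ> s) g V))"
proof -
  note op = assms(1) and xO = assms(3) and hol = assms(4) and nn = assms(5)
  obtain \<rho> where \<rho>: "\<rho> > 0" "ball x \<rho> \<subseteq> \<Omega>"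
    using op xO open_contains_ball by blast
  define P where "P k n \<longleftrightarrow> (\<exists>a b. a \<in> ball x (\<rho> / Suc k) \<and> b \<in> ball x (\<rho> / Suc k) \<and>
                       1/2 \<le> chordal (Some (f n a)) (Some (f n b)))" for k n
  have bad: "\<exists>n\<ge>N. P k n" for k N
  proof (rule ccontr)
    assume "\<not> (\<exists>n\<ge>N. P k n)"
    then have good: "\<And>n a b. n \<ge> N \<Longrightarrow> a \<in> ball x (\<rho> / Suc k) \<Longrightarrow> b \<in> ball x (\<rho> / Suc k) \<Longrightarrow>
                       chordal (Some (f n a)) (Some (f n b)) < 1/2"
      unfolding P_def by (meson not_le)
    define r where "r = \<rho> / Suc k"
    have r: "r > 0" "r \<le> \<rho>" using \<rho> by (auto simp: r_def field_simps)
    have sub: "ball z (r/2) \<subseteq> ball x r" if "z \<in> cball x (r/2)" for z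
    proof
      fix a assume "a \<in> ball z (r/2)"
      then show "a \<in> ball x r" using that dist_triangle[of x a z] by simp
    qed
    have rO: "ball x r \<subseteq> \<Omega>" using r \<rho> by (meson order_trans subset_ball)
    have "normal_seq_on f (ball x (r/2))"
      unfolding normal_seq_on_def
    proof (intro allI impI)
      fix q :: "nat \<Rightarrow> nat" assume q: "strict_mono q"
      define h where "h n = f (q (n + N))" for n
      have qN: "q (n + N) \<ge> N" for n using seq_suble[OF q, of "n+N"] by simp
      obtain s g where s: "strict_mono s" and conv: "sph_unif_conv_on (h \<circ> s) g (cball x (r/2))"
      proof -
        have "\<exists>s g. strict_mono s \<and> sph_unif_conv_on (h \<circ> s) g (cball x (r/2))"
        proof (rule good_conv)
          show "compact (cball x (r/2))" by simp
          show "r/2 > 0" using r by simp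
          show "h n holomorphic_on ball z (r/2)" if "z \<in> cball x (r/2)" for n z
            unfolding h_def using hol sub[OF that] rO holomorphic_on_subset by blast
          show "chordal (Some (h n a)) (Some (h n b)) < 1/2"
            if "z \<in> cball x (r/2)" "a \<in> ball z (r/2)" "b \<in> ball z (r/2)" for n z a b
            unfolding h_def using good[OF qN] sub[OF that(1)] that(2,3) r_def by blast
        qed
        then show ?thesis using that by blast
      qed
      have "sph_loc_unif_conv_on (f \<circ> q \<circ> (\<lambda>n. s n + N)) g (ball x (r/2))"
        unfolding sph_loc_unif_conv_on_def
      proof (intro allI impI)
        fix K assume K: "compact K \<and> K \<subseteq> ball x (r/2)"
        have "(f \<circ> q \<circ> (\<lambda>n. s n + N)) = h \<circ> s" by (auto simp: h_def)
        then show "sph_unif_conv_on (f \<circ> q \<circ> (\<lambda>n. s n + N)) g K"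
          using conv K ball_subset_cball unfolding sph_unif_conv_on_def
          by (smt (verit, ccfv_SIG) eventually_mono subsetD)
      qed
      moreover have "strict_mono (\<lambda>n. s n + N)" using s by (simp add: strict_mono_def)
      ultimately show "\<exists>s g. strict_mono s \<and> sph_loc_unif_conv_on (f \<circ> q \<circ> s) g (ball x (r/2))"
        by blast
    qed
    moreover have "ball x (r/2) \<subseteq> \<Omega>" proof -
      have "ball x (r/2) \<subseteq> ball x r" using r by (intro subset_ball) simp
      then show ?thesis using rO by blast
    qed
    ultimately show False using nn[of "ball x (r/2)"] r by simp
  qed
  obtain r where r: "strict_mono r" "\<And>k. P k (r k)"
    using choose_seq[of P] bad by blast
  show ?thesis
  proof (intro exI conjI allI impI notI)
    show "strict_mono r" by (rule r)
    fix s :: "nat \<Rightarrow> nat" and V assume s: "strict_mono s" and V: "open V" "x \<in> V" "V \<subseteq> \<Omega>"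
    assume "\<exists>g. sph_unif_conv_on (f \<circ> r \<circ> s) g V"
    then obtain g where g: "sph_unif_conv_on (f \<circ> r \<circ> s) g V" by blast
    obtain \<epsilon> where \<epsilon>: "\<epsilon> > 0" "ball x \<epsilon> \<subseteq> V" using V open_contains_ball by blast
    obtain N where N: "\<And>n z. n \<ge> N \<Longrightarrow> z \<in> V \<Longrightarrow> chordal (Some (f (r (s n)) z)) (g z) < 1/10"
      using g unfolding sph_unif_conv_on_def eventually_sequentially
      by (metis comp_apply zero_less_divide_1_iff zero_less_numeral)
    define \<phi> where "\<phi> = f (r (s N))"
    have "continuous_on \<Omega> \<phi>" unfolding \<phi>_def using hol holomorphic_on_imp_continuous_on by blast
    then obtain \<eta> where \<eta>: "\<eta> > 0" "\<And>y. y \<in> \<Omega> \<Longrightarrow> dist y x < \<eta> \<Longrightarrow> dist (\<phi> y) (\<phi> x) < 1/40"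
      using xO unfolding continuous_on_iff by (metis zero_less_divide_1_iff zero_less_numeral)
    define \<eta>' where "\<eta>' = min \<eta> \<epsilon>"
    have \<eta>': "\<eta>' > 0" using \<eta> \<epsilon> by (simp add: \<eta>'_def)
    have phi_small: "chordal (Some (\<phi> a)) (Some (\<phi> b)) < 1/10" if "a \<in> ball x \<eta>'" "b \<in> ball x \<eta>'" for a b
    proof -
      have ab: "a \<in> V" "b \<in> V" "dist a x < \<eta>" "dist b x < \<eta>"
        using that \<epsilon> by (auto simp: \<eta>'_def dist_commute)
      have "chordal (Some (\<phi> a)) (Some (\<phi> b)) \<le> 2 * cmod (\<phi> a - \<phi> b)" by (rule chordal_le)
      also have "cmod (\<phi> a - \<phi> b) \<le> dist (\<phi> a) (\<phi> x) + dist (\<phi> b) (\<phi> x)"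
        using dist_triangle2[of "\<phi> a" "\<phi> b" "\<phi> x"] by (simp add: dist_norm)
      finally show ?thesis using \<eta>(2)[of a] \<eta>(2)[of b] ab V(3) by force
    qed
    obtain m0 :: nat where m0: "\<rho> / \<eta>' < m0" using reals_Archimedean2 by blast
    define m where "m = max m0 N"
    have sm: "s m \<ge> m" using seq_suble[OF s] by simp
    have "\<rho> / Suc (s m) \<le> \<rho> / Suc m0"
      using sm \<rho> by (intro divide_left_mono) (auto simp: m_def)
    also have "\<rho> / Suc m0 < \<eta>'"
      using m0 \<eta>' by (simp add: divide_less_eq mult.commute distrib_left)
    finally have lt: "\<rho> / Suc (s m) < \<eta>'" .
    from r(2)[of "s m"] obtain a b where ab: "a \<in> ball x (\<rho> / Suc (s m))" "b \<in> ball x (\<rho> / Suc (s m))"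
      and big: "1/2 \<le> chordal (Some (f (r (s m)) a)) (Some (f (r (s m)) b))"
      unfolding P_def by blast
    have ab': "a \<in> ball x \<eta>'" "b \<in> ball x \<eta>'" using ab lt by auto
    have abV: "a \<in> V" "b \<in> V" using ab' \<epsilon> by (auto simp: \<eta>'_def)
    have mN: "m \<ge> N" by (simp add: m_def)
    let ?A = "Some (f (r (s m)) a)" and ?B = "Some (f (r (s m)) b)"
    have "chordal ?A ?B \<le> chordal ?A (g a) + chordal (g a) (Some (\<phi> a)) + chordal (Some (\<phi> a)) (Some (\<phi> b))
          + chordal (Some (\<phi> b)) (g b) + chordal (g b) ?B"
      using chordal_triangle by (smt (verit))
    also have "\<dots> < 1/10 + 1/10 + 1/10 + 1/10 + 1/10"
      using N[OF mN abV(1)] N[OF mN abV(2)] N[OF order_refl abV(1)] N[OF order_refl abV(2)]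
        phi_small[OF ab'] chordal_commute unfolding \<phi>_def by (smt (verit))
    finally show False using big by simp
  qed
qed

end
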